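(* Let $x,y,z$ be positive integers with $\gcd(x,y)=1$. If there is a prime $p\ge 3$ such that $x^{p}+y^{p}=z^{p}$, then $z+2\le x+y\le 2(z-1)$. *)

theory Defs
  imports "HOL-Computational_Algebra.Primes"
begin

end

theory Submission
  imports Defs
begin

theorem theorem5:
  fixes x y z p :: nat
  assumes "x > 0" and "y > 0" and "z > 0"
    and "gcd x y = 1"
    and "prime p" and "p \<ge> 3"
    and "x ^ p + y ^ p = z ^ p"
  shows "z + 2 \<le> x + y \<and> x + y \<le> 2 * (z - 1)"
proof -
  have p0: "p > 0" using assms(6) by simp
  have "0 < y ^ p" using assms(2) by simp
  hence "x ^ p < z ^ p" using assms(7) by linarith
  hence xz: "x < z" using power_less_imp_less_base by blast
  have "0 < x ^ p" using assms(1) by simp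
  hence "y ^ p < z ^ p" using assms(7) by linarith
  hence yz: "y < z" using power_less_imp_less_base by blast
  define q where "q = p - 1"
  have q: "p = Suc q" and q0: "q > 0" using assms(6) unfolding q_def by auto
  have a: "x ^ q < (x+y) ^ q" using assms(2) q0 by (simp add: power_strict_mono)
  have b: "y ^ q \<le> (x+y) ^ q" by (simp add: power_mono)
  have "x ^ p + y ^ p = x ^ q * x + y ^ q * y" using q by (simp add: mult.commute)
  also have "\<dots> < (x+y)^q * x + (x+y)^q * y"
    using a b assms(1) by (meson add_less_le_mono mult_le_mono1 mult_less_mono1)
  also have "\<dots> = (x+y)^p" using q by (simp add: algebra_simps)
  finally have "z ^ p < (x+y)^p" using assms(7) by simp
  hence zl: "z < x + y" using power_less_imp_less_base by blast
  have "even (x ^ p + y ^ p) = even (z ^ p)" using assms(7) by simp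
  hence par: "even (x + y) = even z" using p0 by (simp add: even_power)
  have "x + y \<noteq> z + 1"
  proof
    assume "x + y = z + 1"
    hence "even (x+y) = even (z+1)" by simp
    thus False using par by simp
  qed
  thus ?thesis using zl xz yz by linarith
qed

end
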